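(* Let $\mathcal{X}=\{x_1,\dots,x_N\}$ and $\mathcal{Y}=\{y_1,\dots,y_M\}$ be finite alphabets, $P_X$ a probability mass function on $\mathcal{X}$ with full support, and $U=(u_{ij})$ an $N\times M$ matrix whose $i$-th row is a permutation of $\{1,\dots,M\}$; write $u(x_i,y_j)=u_{ij}$. Fix $h^*\in\{1,\dots,M\}$ and let $\mathcal{Y}^+(h^* )=\{y_j\in\mathcal{Y}:\exists i,\ u_{ij}\ge h^*\}$. Then the optimal value of the problem $$\min_{P_{Y|X}}\ \max_{y\in\mathcal{S}_Y}\ \ell_{P_{Y|X}\times P_X}(X\to y)$$ over all mechanisms $P_{Y|X}=(p_{ij})$ with $p_{ij}=0$ whenever $u_{ij}<h^*$ and with $\mathcal{S}_Y=\mathcal{Y}^+(h^* )$ (which is attained by the mechanism $M^*(h^* )$ with $[M^*(h^* )]_{ij}=0$ if $u_{ij}<h^*$ and $\frac{1}{M-h^*+1}$ otherwise) equals $$-\log\min_{y\in\mathcal{Y}^+(h^* )}\ \sum_{x\in\mathcal{X}:\,u(x,y)\ge h^*}P_X(x).$$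
   Context: A privacy mechanism is a conditional distribution $P_{Y|X}$, written as an $N\times M$ row-stochastic matrix with $p_{ij}=P_{Y|X=x_i}(y_j)$. With $P_Y(y)=\sum_x P_X(x)P_{Y|X=x}(y)$, the output support is $\mathcal{S}_Y=\{y:P_Y(y)>0\}$ and $P_{X|Y=y}(x)=P_{Y|X=x}(y)P_X(x)/P_Y(y)$. The pointwise maximal leakage of $y\in\mathcal{S}_Y$ is $\ell_{P_{Y|X}\times P_X}(X\to y)=\log\max_{x\in\mathcal{X}}\frac{P_{X|Y=y}(x)}{P_X(x)}$. The entry $u_{ij}=k$ means that the pair $(x_i,y_j)$ yields the $k$-th lowest utility value for input $x_i$. *)

theory Defs
  imports Complex_Main
begin

text \<open>Indices are 0-based: inputs x_i with i < N, outputs y_j with j < M.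
  A mechanism is p :: nat => nat => real with p i j = P_{Y|X=x_i}(y_j).\<close>

definition mechanism :: "nat \<Rightarrow> nat \<Rightarrow> (nat \<Rightarrow> nat \<Rightarrow> real) \<Rightarrow> bool" where
  "mechanism N M p \<longleftrightarrow> (\<forall>i<N. (\<forall>j<M. 0 \<le> p i j) \<and> (\<Sum>j<M. p i j) = 1)"

definition PY :: "nat \<Rightarrow> (nat \<Rightarrow> real) \<Rightarrow> (nat \<Rightarrow> nat \<Rightarrow> real) \<Rightarrow> nat \<Rightarrow> real" where
  "PY N PX p j = (\<Sum>i<N. PX i * p i j)"

definition out_support :: "nat \<Rightarrow> nat \<Rightarrow> (nat \<Rightarrow> real) \<Rightarrow> (nat \<Rightarrow> nat \<Rightarrow> real) \<Rightarrow> nat set" where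
  "out_support N M PX p = {j. j < M \<and> PY N PX p j > 0}"

definition posterior :: "nat \<Rightarrow> (nat \<Rightarrow> real) \<Rightarrow> (nat \<Rightarrow> nat \<Rightarrow> real) \<Rightarrow> nat \<Rightarrow> nat \<Rightarrow> real" where
  "posterior N PX p j i = p i j * PX i / PY N PX p j"

definition pml :: "nat \<Rightarrow> (nat \<Rightarrow> real) \<Rightarrow> (nat \<Rightarrow> nat \<Rightarrow> real) \<Rightarrow> nat \<Rightarrow> real" where
  "pml N PX p j = ln (Max ((\<lambda>i. posterior N PX p j i / PX i) ` {..<N}))"

definition max_pml :: "nat \<Rightarrow> nat \<Rightarrow> (nat \<Rightarrow> real) \<Rightarrow> (nat \<Rightarrow> nat \<Rightarrow> real) \<Rightarrow> real" where
  "max_pml N M PX p = Max (pml N PX p ` out_support N M PX p)"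

definition Yplus :: "nat \<Rightarrow> nat \<Rightarrow> (nat \<Rightarrow> nat \<Rightarrow> nat) \<Rightarrow> nat \<Rightarrow> nat set" where
  "Yplus N M u h = {j. j < M \<and> (\<exists>i<N. h \<le> u i j)}"

definition feasible :: "nat \<Rightarrow> nat \<Rightarrow> (nat \<Rightarrow> real) \<Rightarrow> (nat \<Rightarrow> nat \<Rightarrow> nat) \<Rightarrow> nat
    \<Rightarrow> (nat \<Rightarrow> nat \<Rightarrow> real) \<Rightarrow> bool" where
  "feasible N M PX u h p \<longleftrightarrow> mechanism N M p \<and> (\<forall>i<N. \<forall>j<M. u i j < h \<longrightarrow> p i j = 0)
     \<and> out_support N M PX p = Yplus N M u h"

definition Mstar :: "nat \<Rightarrow> (nat \<Rightarrow> nat \<Rightarrow> nat) \<Rightarrow> nat \<Rightarrow> nat \<Rightarrow> nat \<Rightarrow> real" where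
  "Mstar M u h i j = (if u i j < h then 0 else 1 / real (M - h + 1))"

end

theory Submission
  imports Defs
begin

lemma card_pre_bij:
  assumes "bij_betw f A C" "B \<subseteq> C" "finite A"
  shows "card {x\<in>A. f x \<in> B} = card B"
proof -
  have inj: "inj_on f {x\<in>A. f x \<in> B}" using assms(1) unfolding bij_betw_def
    by (auto intro: inj_on_subset)
  have "f ` {x\<in>A. f x \<in> B} = B" using assms(1,2) unfolding bij_betw_def by blast
  then show ?thesis using card_image[OF inj] by simp
qed

theorem corollary1:
  fixes N M h :: nat and PX :: "nat \<Rightarrow> real" and u :: "nat \<Rightarrow> nat \<Rightarrow> nat"
  assumes PX_pos: "\<forall>i<N. PX i > 0"
    and PX_sum: "(\<Sum>i<N. PX i) = 1"
    and u_perm: "\<forall>i<N. bij_betw (u i) {..<M} {1..M}"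
    and h_range: "h \<in> {1..M}"
  shows "feasible N M PX u h (Mstar M u h)
    \<and> max_pml N M PX (Mstar M u h)
        = - ln (Min ((\<lambda>j. \<Sum>i\<in>{i. i < N \<and> h \<le> u i j}. PX i) ` Yplus N M u h))
    \<and> (\<forall>p. feasible N M PX u h p \<longrightarrow>
          - ln (Min ((\<lambda>j. \<Sum>i\<in>{i. i < N \<and> h \<le> u i j}. PX i) ` Yplus N M u h))
          \<le> max_pml N M PX p)"
proof -
  define S where "S j = (\<Sum>i\<in>{i. i < N \<and> h \<le> u i j}. PX i)" for j
  define Y where "Y = Yplus N M u h"
  define c where "c = 1 / real (M - h + 1)"
  have c_pos: "c > 0" unfolding c_def by simp
  have N_pos: "N > 0" using PX_sum by (cases N) auto
  have fin_T: "finite {i. i < N \<and> h \<le> u i j}" for j by auto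
  have S_pos: "S j > 0" if "j \<in> Y" for j
  proof -
    from that obtain i where i: "i < N" "h \<le> u i j" unfolding Y_def Yplus_def by auto
    show ?thesis unfolding S_def
      by (rule sum_pos2[OF fin_T, of i]) (use i PX_pos in auto)
  qed
  have S_nonneg: "S j \<ge> 0" for j unfolding S_def using PX_pos by (auto intro: sum_nonneg less_imp_le)
  have S_pos_iff: "S j > 0 \<longleftrightarrow> (\<exists>i<N. h \<le> u i j)" for j
  proof
    assume "S j > 0"
    then show "\<exists>i<N. h \<le> u i j" unfolding S_def by (metis (no_types, lifting) empty_Collect_eq less_irrefl sum.empty)
  next
    assume "\<exists>i<N. h \<le> u i j"
    then obtain i where i: "i < N" "h \<le> u i j" by auto
    show "S j > 0" unfolding S_def
      by (rule sum_pos2[OF fin_T, of i]) (use i PX_pos in auto)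
  qed
  have finY: "finite Y" unfolding Y_def Yplus_def by auto
  have Yne: "Y \<noteq> {}"
  proof -
    have "bij_betw (u 0) {..<M} {1..M}" using u_perm N_pos by auto
    moreover have "h \<in> {1..M}" using h_range .
    ultimately obtain j where "j < M" "u 0 j = h" unfolding bij_betw_def by (metis imageE lessThan_iff)
    then have "j \<in> Y" unfolding Y_def Yplus_def using N_pos by auto
    then show ?thesis by auto
  qed
  have "Min (S ` Y) \<in> S ` Y" by (rule Min_in) (use finY Yne in auto)
  then obtain j0 where j0: "j0 \<in> Y" "S j0 = Min (S ` Y)" by (metis imageE)
  have j0_le: "S j0 \<le> S j" if "j \<in> Y" for j using j0(2) finY that by simp
  have Sj0: "S j0 > 0" using S_pos j0(1) by auto
  have goal_rhs: "- ln (Min ((\<lambda>j. \<Sum>i\<in>{i. i < N \<and> h \<le> u i j}. PX i) ` Yplus N M u h)) = - ln (S j0)"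
    using j0(2) unfolding S_def[abs_def] Y_def by simp
  have card_row: "card {j\<in>{..<M}. u i j \<in> {h..M}} = M - h + 1" if "i < N" for i
    using card_pre_bij[of "u i" "{..<M}" "{1..M}" "{h..M}"] u_perm that h_range by auto
  have Mst: "Mstar M u h i j = (if h \<le> u i j then c else 0)" for i j
    unfolding Mstar_def c_def by (simp add: not_less)
  have rowsum: "(\<Sum>j<M. Mstar M u h i j) = 1" if "i < N" for i
  proof -
    have img: "u i ` {..<M} = {1..M}" using u_perm that unfolding bij_betw_def by blast
    have uleM: "u i j \<le> M" if "j < M" for j
    proof -
      have "u i j \<in> u i ` {..<M}" using that by blast
      then show ?thesis using img by simp
    qed
    have eqset: "{j\<in>{..<M}. h \<le> u i j} = {j\<in>{..<M}. u i j \<in> {h..M}}"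
      using uleM by auto
    have "(\<Sum>j<M. Mstar M u h i j) = (\<Sum>j<M. if h \<le> u i j then c else 0)"
      unfolding Mst ..
    also have "\<dots> = (\<Sum>j\<in>{j\<in>{..<M}. h \<le> u i j}. c)"
      by (rule sum.inter_filter[symmetric]) simp
    also have "\<dots> = real (card {j\<in>{..<M}. u i j \<in> {h..M}}) * c"
      unfolding eqset by simp
    also have "\<dots> = 1" unfolding card_row[OF that] c_def by simp
    finally show ?thesis .
  qed
  have PY_M: "PY N PX (Mstar M u h) j = c * S j" for j
  proof -
    have "PY N PX (Mstar M u h) j = (\<Sum>i<N. if h \<le> u i j then c * PX i else 0)"
      unfolding PY_def Mst by (rule sum.cong) auto
    also have "\<dots> = (\<Sum>i\<in>{i\<in>{..<N}. h \<le> u i j}. c * PX i)"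
      by (rule sum.inter_filter[symmetric]) simp
    also have "{i\<in>{..<N}. h \<le> u i j} = {i. i < N \<and> h \<le> u i j}" by auto
    finally show ?thesis unfolding S_def by (simp add: sum_distrib_left)
  qed
  have cS: "c * S j > 0 \<longleftrightarrow> S j > 0" for j using c_pos by (simp add: zero_less_mult_iff)
  have supp_M: "out_support N M PX (Mstar M u h) = Y"
    unfolding out_support_def PY_M Y_def Yplus_def cS S_pos_iff ..
  have feas: "feasible N M PX u h (Mstar M u h)"
    unfolding feasible_def mechanism_def
  proof (intro conjI allI impI)
    fix i j assume "i < N" "j < M"
    show "0 \<le> Mstar M u h i j" unfolding Mst using c_pos by simp
  next
    fix i assume "i < N" then show "(\<Sum>j<M. Mstar M u h i j) = 1" by (rule rowsum)
  next
    fix i j assume "i < N" "j < M" "u i j < h"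
    then show "Mstar M u h i j = 0" unfolding Mst by simp
  next
    show "out_support N M PX (Mstar M u h) = Yplus N M u h" using supp_M unfolding Y_def .
  qed
  have pml_M: "pml N PX (Mstar M u h) j = - ln (S j)" if "j \<in> Y" for j
  proof -
    obtain i0 where i0: "i0 < N" "h \<le> u i0 j" using \<open>j \<in> Y\<close> unfolding Y_def Yplus_def by auto
    have val: "posterior N PX (Mstar M u h) j i / PX i = (if u i j < h then 0 else 1 / S j)"
      if "i < N" for i
    proof (cases "h \<le> u i j")
      case True
      have "PX i \<noteq> 0" "c \<noteq> 0" "S j \<noteq> 0" using PX_pos that c_pos S_pos[OF \<open>j \<in> Y\<close>] by auto
      then show ?thesis unfolding posterior_def PY_M Mst using True by (simp add: field_simps)
    next
      case False
      then show ?thesis unfolding posterior_def PY_M Mst by simp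
    qed
    have "Max ((\<lambda>i. posterior N PX (Mstar M u h) j i / PX i) ` {..<N}) = 1 / S j"
    proof (rule Max_eqI)
      show "finite ((\<lambda>i. posterior N PX (Mstar M u h) j i / PX i) ` {..<N})" by auto
      show "y \<le> 1 / S j" if "y \<in> (\<lambda>i. posterior N PX (Mstar M u h) j i / PX i) ` {..<N}" for y
        using that val S_pos[OF \<open>j \<in> Y\<close>] by auto
      show "1 / S j \<in> (\<lambda>i. posterior N PX (Mstar M u h) j i / PX i) ` {..<N}"
        using val[OF i0(1)] i0 by (auto intro!: image_eqI[of _ _ i0])
    qed
    then show ?thesis unfolding pml_def using S_pos[OF that] by (simp add: ln_div)
  qed
  have maxM: "max_pml N M PX (Mstar M u h) = - ln (S j0)"
    unfolding max_pml_def supp_M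
  proof (rule Max_eqI)
    show "finite (pml N PX (Mstar M u h) ` Y)" using finY by auto
    show "y \<le> - ln (S j0)" if "y \<in> pml N PX (Mstar M u h) ` Y" for y
    proof -
      from that obtain j where j: "j \<in> Y" "y = pml N PX (Mstar M u h) j" by auto
      have "ln (S j0) \<le> ln (S j)" using j0_le[OF j(1)] Sj0 by simp
      then show ?thesis using j pml_M by simp
    qed
    show "- ln (S j0) \<in> pml N PX (Mstar M u h) ` Y" using pml_M j0(1) by force
  qed
  have lower: "- ln (S j0) \<le> max_pml N M PX p" if fp: "feasible N M PX u h p" for p
  proof -
    have mech: "\<forall>i<N. (\<forall>j<M. 0 \<le> p i j)" and zero: "\<forall>i<N. \<forall>j<M. u i j < h \<longrightarrow> p i j = 0"
      and supp: "out_support N M PX p = Y"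
      using fp unfolding feasible_def mechanism_def Y_def by auto
    have j0M: "j0 < M" using j0(1) unfolding Y_def Yplus_def by auto
    define m where "m = Max ((\<lambda>i. p i j0) ` {..<N})"
    have "m \<in> (\<lambda>i. p i j0) ` {..<N}" unfolding m_def
      by (rule Max_in) (use N_pos in auto)
    then obtain im where im: "im < N" "p im j0 = m" by auto
    have le_m: "p i j0 \<le> m" if "i < N" for i unfolding m_def using that by auto
    have PYpos: "PY N PX p j0 > 0" using supp j0(1) unfolding out_support_def by auto
    have "PY N PX p j0 = (\<Sum>i\<in>{i. i < N \<and> h \<le> u i j0}. PX i * p i j0)"
      unfolding PY_def
      by (rule sum.mono_neutral_right) (use zero j0M in \<open>auto simp: not_le\<close>)
    also have "\<dots> \<le> (\<Sum>i\<in>{i. i < N \<and> h \<le> u i j0}. PX i * m)"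
      by (rule sum_mono, rule mult_left_mono) (use le_m PX_pos in auto)
    also have "\<dots> = m * S j0" unfolding S_def by (subst sum_distrib_right[symmetric]) (rule mult.commute)
    finally have PYle: "PY N PX p j0 \<le> m * S j0" .
    have ratio: "1 / S j0 \<le> m / PY N PX p j0"
      using PYle PYpos Sj0 by (simp add: field_simps)
    have eqm: "m / PY N PX p j0 = posterior N PX p j0 im / PX im"
      unfolding posterior_def using PX_pos im by auto
    have mem: "m / PY N PX p j0 \<in> (\<lambda>i. posterior N PX p j0 i / PX i) ` {..<N}"
      by (rule image_eqI[of _ _ im]) (use eqm im in auto)
    have "m / PY N PX p j0 \<le> Max ((\<lambda>i. posterior N PX p j0 i / PX i) ` {..<N})"
      by (rule Max_ge) (use mem in auto)
    with ratio have "1 / S j0 \<le> Max ((\<lambda>i. posterior N PX p j0 i / PX i) ` {..<N})" by linarith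
    then have "ln (1 / S j0) \<le> pml N PX p j0" unfolding pml_def using Sj0 by (intro ln_mono) auto
    then have "- ln (S j0) \<le> pml N PX p j0" using Sj0 by (simp add: ln_div)
    also have "\<dots> \<le> max_pml N M PX p" unfolding max_pml_def supp using finY j0(1) by auto
    finally show ?thesis .
  qed
  show ?thesis unfolding goal_rhs using feas maxM lower by auto
qed

end
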